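(* Let $\mathbf v=(v_1,\dots,v_m)$ and $\mathbf k=(k_1,\dots,k_m)$ be $m$-tuples of positive integers with $2\le k_i\le v_i$ for all $i$, and let $v_{\max}=\max_i v_i$ and $k_{\min}=\min_i k_i$. Then $C(\mathbf v,\mathbf k,2)\le C(v_{\max},k_{\min},2)$.
   Context: Let $X_1,\dots,X_m$ be pairwise disjoint sets with $|X_i|=v_i$. A block is an $m$-tuple $(B_1,\dots,B_m)$ with $B_i\subseteq X_i$, $|B_i|=k_i$. An $m$-tuple of sets $(T_1,\dots,T_m)$ is $(\mathbf v,\mathbf k,2)$-admissible if $T_i\subseteq X_i$, $|T_i|\le k_i$ and $\sum|T_i|=2$; it is contained in a block if $T_i\subseteq B_i$ for all $i$. A ${\rm GC}(\mathbf v,\mathbf k,2)$ is a finite family (repetitions allowed) of blocks containing every admissible tuple in at least one block; $C(\mathbf v,\mathbf k,2)$ is the minimum number of blocks. For integers $v\ge k\ge2$, $C(v,k,2)$ is the ordinary covering number: the minimum number of $k$-subsets of a $v$-set such that every $2$-subset is contained in at least one of them. *)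

theory Defs
  imports Main
begin

text \<open>Ground sets: X_i is modelled as {..<v i} (tagged by the index i implicitly,
  so the X_i are pairwise disjoint). Tuples are functions nat => nat set,
  only the indices i < m are relevant.\<close>

definition gc_block :: "nat \<Rightarrow> (nat \<Rightarrow> nat) \<Rightarrow> (nat \<Rightarrow> nat) \<Rightarrow> (nat \<Rightarrow> nat set) \<Rightarrow> bool" where
  "gc_block m v k B \<longleftrightarrow> (\<forall>i<m. B i \<subseteq> {..<v i} \<and> card (B i) = k i)"

definition gc_admissible :: "nat \<Rightarrow> (nat \<Rightarrow> nat) \<Rightarrow> (nat \<Rightarrow> nat) \<Rightarrow> (nat \<Rightarrow> nat set) \<Rightarrow> bool" where
  "gc_admissible m v k T \<longleftrightarrow>
     (\<forall>i<m. T i \<subseteq> {..<v i} \<and> card (T i) \<le> k i) \<and> (\<Sum>i<m. card (T i)) = 2"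

definition gc_contained :: "nat \<Rightarrow> (nat \<Rightarrow> nat set) \<Rightarrow> (nat \<Rightarrow> nat set) \<Rightarrow> bool" where
  "gc_contained m T B \<longleftrightarrow> (\<forall>i<m. T i \<subseteq> B i)"

text \<open>A GC(v,k,2): a finite family (list, so repetitions allowed) of blocks
  containing every admissible tuple in at least one block.\<close>
definition is_GC :: "nat \<Rightarrow> (nat \<Rightarrow> nat) \<Rightarrow> (nat \<Rightarrow> nat) \<Rightarrow> (nat \<Rightarrow> nat set) list \<Rightarrow> bool" where
  "is_GC m v k F \<longleftrightarrow> (\<forall>B\<in>set F. gc_block m v k B) \<and>
     (\<forall>T. gc_admissible m v k T \<longrightarrow> (\<exists>B\<in>set F. gc_contained m T B))"

definition GC_number :: "nat \<Rightarrow> (nat \<Rightarrow> nat) \<Rightarrow> (nat \<Rightarrow> nat) \<Rightarrow> nat" where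
  "GC_number m v k = (LEAST n. \<exists>F. is_GC m v k F \<and> length F = n)"

definition is_covering :: "nat \<Rightarrow> nat \<Rightarrow> nat set list \<Rightarrow> bool" where
  "is_covering v k F \<longleftrightarrow> (\<forall>B\<in>set F. B \<subseteq> {..<v} \<and> card B = k) \<and>
     (\<forall>P. P \<subseteq> {..<v} \<and> card P = 2 \<longrightarrow> (\<exists>B\<in>set F. P \<subseteq> B))"

definition covering_number :: "nat \<Rightarrow> nat \<Rightarrow> nat" where
  "covering_number v k = (LEAST n. \<exists>F. is_covering v k F \<and> length F = n)"

end

theory Submission
  imports Defs
begin

lemma extend_subset:
  assumes "finite S" "U \<subseteq> S" "card U \<le> n" "n \<le> card S"
  shows "\<exists>P. U \<subseteq> P \<and> P \<subseteq> S \<and> card P = n"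
proof -
  have fU: "finite U" using assms finite_subset by blast
  have "card (S - U) = card S - card U" using assms fU card_Diff_subset by blast
  hence "n - card U \<le> card (S - U)" using assms by linarith
  then obtain D where D: "D \<subseteq> S - U" "card D = n - card U"
    using obtain_subset_with_card_n by metis
  have fD: "finite D" using D assms finite_subset by (meson finite_Diff)
  have "card (U \<union> D) = card U + card D"
    using D fU fD by (intro card_Un_disjoint) auto
  thus ?thesis using D assms by (intro exI[of _ "U \<union> D"]) auto
qed

theorem theorem3p18:
  fixes m :: nat and v k :: "nat \<Rightarrow> nat"
  assumes "m \<ge> 1"
    and "\<forall>i<m. 2 \<le> k i \<and> k i \<le> v i"
  shows "GC_number m v k \<le>
           covering_number (Max (v ` {..<m})) (Min (k ` {..<m}))"
proof -
  define V where "V = Max (v ` {..<m})"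
  define K where "K = Min (k ` {..<m})"
  have ne: "{..<m} \<noteq> {}" using assms(1) lessThan_empty_iff by (metis not_one_le_zero)
  have vV: "v i \<le> V" if "i < m" for i unfolding V_def using that by (intro Max_ge) auto
  have Kk: "K \<le> k i" if "i < m" for i unfolding K_def using that by (intro Min_le) auto
  have "K \<in> k ` {..<m}" unfolding K_def using ne by (intro Min_in) auto
  then obtain j where j: "j < m" "K = k j" by auto
  have K2: "2 \<le> K" using j assms(2) by auto
  have KV: "K \<le> V" using j assms(2) vV[of j] by auto
  define S where "S = {B. B \<subseteq> {..<V} \<and> card B = K}"
  define F0 where "F0 = (SOME xs. set xs = S)"
  have finS: "finite {B. B \<subseteq> {..<V} \<and> card B = K}" by (rule finite_subset[of _ "Pow {..<V}"]) auto
  have "is_covering V K F0"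
    unfolding is_covering_def
  proof (intro conjI allI impI)
    have sF0: "set F0 = S" unfolding F0_def using finite_list[OF finS[folded S_def]] by (rule someI_ex)
    thus "\<forall>B\<in>set F0. B \<subseteq> {..<V} \<and> card B = K"
      unfolding S_def by simp
    fix P assume P: "P \<subseteq> {..<V} \<and> card P = 2"
    have c: "K \<le> card {..<V}" "card P \<le> K" using K2 KV P by auto
    then obtain B where "P \<subseteq> B" "B \<subseteq> {..<V}" "card B = K"
      using extend_subset[OF finite_lessThan _ c(2) c(1)] P by blast
    thus "\<exists>B\<in>set F0. P \<subseteq> B"
      using sF0 unfolding S_def by auto
  qed
  hence "\<exists>n F. is_covering V K F \<and> length F = n" by blast
  hence "\<exists>F. is_covering V K F \<and> length F = covering_number V K"
    unfolding covering_number_def by (rule LeastI_ex)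
  then obtain F where F: "is_covering V K F" "length F = covering_number V K" by blast
  have cov: "\<exists>B\<in>set F. U \<subseteq> B" if U1: "U \<subseteq> {..<V}" and U2: "card U \<le> 2" for U
  proof -
    have c: "2 \<le> card {..<V}" using K2 KV by simp
    obtain P where P: "U \<subseteq> P" "P \<subseteq> {..<V}" "card P = 2"
      using extend_subset[OF finite_lessThan U1 U2 c] by blast
    have "\<forall>P. P \<subseteq> {..<V} \<and> card P = 2 \<longrightarrow> (\<exists>B\<in>set F. P \<subseteq> B)"
      using F(1) unfolding is_covering_def by blast
    then obtain B where "B \<in> set F" "P \<subseteq> B" using P by blast
    thus ?thesis using P(1) by blast
  qed
  define pad where "pad = (\<lambda>i B. SOME C. B \<inter> {..<v i} \<subseteq> C \<and> C \<subseteq> {..<v i} \<and> card C = k i)"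
  have padP: "B \<inter> {..<v i} \<subseteq> pad i B \<and> pad i B \<subseteq> {..<v i} \<and> card (pad i B) = k i"
    if "i < m" "B \<in> set F" for i B
  proof -
    have B: "B \<subseteq> {..<V}" "card B = K" using F(1) that unfolding is_covering_def by auto
    have "card (B \<inter> {..<v i}) \<le> card B" using B by (intro card_mono) (auto intro: finite_subset)
    hence c1: "card (B \<inter> {..<v i}) \<le> k i" using B(2) Kk[OF that(1)] by linarith
    have c2: "k i \<le> card {..<v i}" using assms(2) that(1) by simp
    have "\<exists>C. B \<inter> {..<v i} \<subseteq> C \<and> C \<subseteq> {..<v i} \<and> card C = k i"
      by (rule extend_subset[OF _ _ c1 c2]) auto
    thus ?thesis unfolding pad_def by (rule someI_ex)
  qed
  define G where "G = map (\<lambda>B i. pad i B) F"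
  have "is_GC m v k G"
    unfolding is_GC_def
  proof (intro conjI allI impI ballI)
    fix B' assume "B' \<in> set G"
    then obtain B where "B \<in> set F" "B' = (\<lambda>i. pad i B)" unfolding G_def by auto
    thus "gc_block m v k B'" unfolding gc_block_def using padP by auto
  next
    fix T assume T: "gc_admissible m v k T"
    define U where "U = (\<Union>i<m. T i)"
    have Tsub: "T i \<subseteq> {..<v i}" if "i < m" for i using T that unfolding gc_admissible_def by auto
    have "U \<subseteq> {..<V}" unfolding U_def
    proof (rule UN_least)
      fix i assume i: "i \<in> {..<m}"
      have i': "i < m" using i by simp
      have "{..<v i} \<subseteq> {..<V}" using vV[OF i'] by simp
      thus "T i \<subseteq> {..<V}" using Tsub[OF i'] by (rule order_trans[rotated])
    qed
    moreover have "card U \<le> 2"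
    proof -
      have "card U \<le> (\<Sum>i<m. card (T i))" unfolding U_def by (rule card_UN_le) simp
      moreover have "(\<Sum>i<m. card (T i)) = 2" using T unfolding gc_admissible_def by blast
      ultimately show ?thesis by simp
    qed
    ultimately obtain B where B: "B \<in> set F" "U \<subseteq> B" using cov by blast
    have "gc_contained m T (\<lambda>i. pad i B)" unfolding gc_contained_def
    proof (intro allI impI)
      fix i assume i: "i < m"
      have "T i \<subseteq> B \<inter> {..<v i}" using B Tsub[OF i] i unfolding U_def by auto
      thus "T i \<subseteq> pad i B" using padP[OF i B(1)] by auto
    qed
    thus "\<exists>B\<in>set G. gc_contained m T B" using B unfolding G_def by auto
  qed
  hence "GC_number m v k \<le> length G" unfolding GC_number_def by (intro Least_le) blast
  thus ?thesis using F(2) unfolding G_def V_def K_def by simp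
qed

end
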